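(* Let $R$ be a commutative ring with $\mathbb{Q}\subseteq R$, $\mathcal{A}$ a commutative unital $R$-algebra, and $\mathcal{E}$ a finitely generated projective $\mathcal{A}$-module with a symmetric, strongly nondegenerate, full $\mathcal{A}$-bilinear form $\langle\cdot,\cdot\rangle$. Let $\mathsf{C}_1\in\mathcal{C}^r(\mathcal{E})$ and $\mathsf{C}_2\in\mathcal{C}^s(\mathcal{E})$ with $r,s\ge1$. Then for all $x_1,\dots,x_{r+s-1}\in\mathcal{E}$: $$(\mathsf{C}_1\wedge\mathsf{C}_2)(x_1,\dots,x_{r+s-1})=(-1)^{rs}\sum_{\pi\in\mathrm{Sh}(r,s-1)}\operatorname{sign}(\pi)\,\langle\mathsf{C}_1(x_{\pi(1)},\dots,x_{\pi(r-1)}),x_{\pi(r)}\rangle\,\mathsf{C}_2(x_{\pi(r+1)},\dots,x_{\pi(r+s-1)})$$ $$\qquad+\sum_{\pi\in\mathrm{Sh}(s,r-1)}\operatorname{sign}(\pi)\,\langle\mathsf{C}_2(x_{\pi(1)},\dots,x_{\pi(s-1)}),x_{\pi(s)}\rangle\,\mathsf{C}_1(x_{\pi(s+1)},\dots,x_{\pi(r+s-1)}).$$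
   Context: Strongly nondegenerate: $\mathcal{E}\to\operatorname{Hom}_{\mathcal{A}}(\mathcal{E},\mathcal{A})$ is an isomorphism. Full: every $a\in\mathcal{A}$ is a finite sum $\sum_i\langle x_i,y_i\rangle$. $\operatorname{Der}(\mathcal{A})$: $R$-linear derivations of $\mathcal{A}$. $\mathcal{C}^0(\mathcal{E})=\mathcal{A}$ and $\mathcal{C}^1(\mathcal{E})=\mathcal{E}$. An element of $\mathcal{C}^1$ is regarded as a map with zero arguments; for $y\in\mathcal{E}$, $y()=y$. For $r\ge2$, $\mathcal{C}^r(\mathcal{E})$ is the set of $\mathsf{C}\in\operatorname{Hom}_R(\mathcal{E}^{\otimes_R(r-1)},\mathcal{E})$ admitting an $R$-multilinear symbol $\sigma_{\mathsf{C}}:\mathcal{E}^{\otimes(r-2)}\to\operatorname{Der}(\mathcal{A})$ with two properties: (1) $\sigma_{\mathsf{C}}(x_1,\dots,x_{r-2})\langle u,w\rangle=\langle\mathsf{C}(x_1,\dots,x_{r-2},u),w\rangle+\langle u,\mathsf{C}(x_1,\dots,x_{r-2},w)\rangle$; (2) for $r\ge3$ and $1\le i\le r-2$, $\langle\mathsf{C}(\dots,x_i,x_{i+1},\dots)+\mathsf{C}(\dots,x_{i+1},x_i,\dots),u\rangle=\sigma_{\mathsf{C}}(x_1,\dots,\widehat{x_i},\widehat{x_{i+1}},\dots,x_{r-1},u)\langle x_i,x_{i+1}\rangle$. $i_x\mathsf{C}$ inserts $x$ in the first argument. $[\cdot,\cdot]$ is the unique $R$-bilinear graded skew-symmetric map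 $\mathcal{C}^r\times\mathcal{C}^s\to\mathcal{C}^{r+s-2}$ with: - $[a,b]=0$ and $[a,x]=0=[x,a]$; - $[x,y]=\langle x,y\rangle$; - $[\mathsf{D},a]=\sigma_{\mathsf{D}}(a)=-[a,\mathsf{D}]$ for $\mathsf{D}\in\mathcal{C}^2$; - $[\mathsf{C},x]=i_x\mathsf{C}=(-1)^{r+1}[x,\mathsf{C}]$ for $\mathsf{C}\in\mathcal{C}^r$ with $r\ge2$; - $[[\mathsf{C}_1,\mathsf{C}_2],x]=(-1)^s[[\mathsf{C}_1,x],\mathsf{C}_2]+[\mathsf{C}_1,[\mathsf{C}_2,x]]$. $\wedge$ is the unique degree-$0$ $R$-bilinear product with $a\wedge b=ab$, $a\wedge x=ax=x\wedge a$, and $[\mathsf{C}_1\wedge\mathsf{C}_2,x]=(-1)^s[\mathsf{C}_1,x]\wedge\mathsf{C}_2+\mathsf{C}_1\wedge[\mathsf{C}_2,x]$. $\mathrm{Sh}(p,q)$ denotes the set of $(p,q)$-shuffles: permutations $\pi$ of $\{1,\dots,p+q\}$ with $\pi(1)<\dots<\pi(p)$ and $\pi(p+1)<\dots<\pi(p+q)$. *)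

theory Defs
  imports Complex_Main "HOL-Combinatorics.Permutations"
begin

text \<open>The R-algebra structure of A is given by a unital ring homomorphism phi : R -> A;
  the A-module structure of E by a scalar action sc (library locale module).
  R-linearity of a map on E means linearity w.r.t. the scalars sc (phi c).\<close>

definition contains_rationals :: "'r::comm_ring_1 itself \<Rightarrow> bool" where
  "contains_rationals _ \<longleftrightarrow> (\<forall>n::nat. n \<noteq> 0 \<longrightarrow> (\<exists>u::'r. of_nat n * u = 1))"

definition unital_ring_hom :: "('r::comm_ring_1 \<Rightarrow> 'a::comm_ring_1) \<Rightarrow> bool" where
  "unital_ring_hom phi \<longleftrightarrow> phi 1 = 1 \<and> (\<forall>x y. phi (x + y) = phi x + phi y)
      \<and> (\<forall>x y. phi (x * y) = phi x * phi y)"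

definition A_linear_functional :: "('a::comm_ring_1 \<Rightarrow> 'e::ab_group_add \<Rightarrow> 'e) \<Rightarrow> ('e \<Rightarrow> 'a) \<Rightarrow> bool" where
  "A_linear_functional sc f \<longleftrightarrow> (\<forall>a x y. f (sc a x + y) = a * f x + f y)"

text \<open>Finitely generated projective: E is a direct summand of A^n, expressed by a finite
  dual basis (e_i, f_i), i.e. maps E -> A^n, x |-> (f_i x), and A^n -> E, (a_i) |-> sum a_i e_i
  composing to the identity of E.\<close>
definition fg_projective :: "('a::comm_ring_1 \<Rightarrow> 'e::ab_group_add \<Rightarrow> 'e) \<Rightarrow> bool" where
  "fg_projective sc \<longleftrightarrow> (\<exists>(n::nat) (e::nat \<Rightarrow> 'e) (f::nat \<Rightarrow> 'e \<Rightarrow> 'a).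
      (\<forall>i<n. A_linear_functional sc (f i)) \<and> (\<forall>x. x = (\<Sum>i<n. sc (f i x) (e i))))"

definition A_bilinear :: "('a::comm_ring_1 \<Rightarrow> 'e::ab_group_add \<Rightarrow> 'e) \<Rightarrow> ('e \<Rightarrow> 'e \<Rightarrow> 'a) \<Rightarrow> bool" where
  "A_bilinear sc B \<longleftrightarrow> (\<forall>a x y z. B (sc a x + y) z = a * B x z + B y z
                                 \<and> B z (sc a x + y) = a * B z x + B z y)"

definition symmetric_form :: "('e \<Rightarrow> 'e \<Rightarrow> 'a) \<Rightarrow> bool" where
  "symmetric_form B \<longleftrightarrow> (\<forall>x y. B x y = B y x)"

definition strongly_nondegenerate :: "('a::comm_ring_1 \<Rightarrow> 'e::ab_group_add \<Rightarrow> 'e) \<Rightarrow> ('e \<Rightarrow> 'e \<Rightarrow> 'a) \<Rightarrow> bool" where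
  "strongly_nondegenerate sc B \<longleftrightarrow> inj B \<and> range B = {f. A_linear_functional sc f}"

definition full_form :: "('e \<Rightarrow> 'e \<Rightarrow> 'a::comm_ring_1) \<Rightarrow> bool" where
  "full_form B \<longleftrightarrow> (\<forall>a. \<exists>(n::nat) (x::nat \<Rightarrow> 'e) (y::nat \<Rightarrow> 'e). a = (\<Sum>i<n. B (x i) (y i)))"

definition R_derivation :: "('r::comm_ring_1 \<Rightarrow> 'a::comm_ring_1) \<Rightarrow> ('a \<Rightarrow> 'a) \<Rightarrow> bool" where
  "R_derivation phi D \<longleftrightarrow> (\<forall>a b. D (a + b) = D a + D b) \<and> (\<forall>c a. D (phi c * a) = phi c * D a)
      \<and> (\<forall>a b. D (a * b) = a * D b + D a * b)"

text \<open>R-multilinear maps E^k -> E, represented as functions on lists (only lists of length k matter).\<close>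
definition R_multilinear_E :: "('r::comm_ring_1 \<Rightarrow> 'a::comm_ring_1) \<Rightarrow> ('a \<Rightarrow> 'e::ab_group_add \<Rightarrow> 'e)
      \<Rightarrow> nat \<Rightarrow> ('e list \<Rightarrow> 'e) \<Rightarrow> bool" where
  "R_multilinear_E phi sc k C \<longleftrightarrow> (\<forall>xs. length xs = k \<longrightarrow> (\<forall>i<k. \<forall>u v c.
      C (xs[i := u + v]) = C (xs[i := u]) + C (xs[i := v])
    \<and> C (xs[i := sc (phi c) u]) = sc (phi c) (C (xs[i := u]))))"

text \<open>R-multilinear maps E^k -> Der(A) (R-module structure of Der(A) pointwise).\<close>
definition R_multilinear_Der :: "('r::comm_ring_1 \<Rightarrow> 'a::comm_ring_1) \<Rightarrow> ('a \<Rightarrow> 'e::ab_group_add \<Rightarrow> 'e)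
      \<Rightarrow> nat \<Rightarrow> ('e list \<Rightarrow> 'a \<Rightarrow> 'a) \<Rightarrow> bool" where
  "R_multilinear_Der phi sc k S \<longleftrightarrow> (\<forall>xs. length xs = k \<longrightarrow> R_derivation phi (S xs)) \<and>
    (\<forall>xs. length xs = k \<longrightarrow> (\<forall>i<k. \<forall>u v c a.
      S (xs[i := u + v]) a = S (xs[i := u]) a + S (xs[i := v]) a
    \<and> S (xs[i := sc (phi c) u]) a = phi c * S (xs[i := u]) a))"

text \<open>Membership in C^r(E) for r >= 1. An element of C^r is represented by a function
  C :: 'e list => 'e, evaluated on lists of length r - 1. For r = 1 the element of
  C^1 = E is C [] (a map with zero arguments).
  Positions are 0-indexed: swapping positions i, i+1 with i+1 < r-1.\<close>
definition in_C :: "('r::comm_ring_1 \<Rightarrow> 'a::comm_ring_1) \<Rightarrow> ('a \<Rightarrow> 'e::ab_group_add \<Rightarrow> 'e)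
      \<Rightarrow> ('e \<Rightarrow> 'e \<Rightarrow> 'a) \<Rightarrow> nat \<Rightarrow> ('e list \<Rightarrow> 'e) \<Rightarrow> bool" where
  "in_C phi sc B r C \<longleftrightarrow> r = 1 \<or> (r \<ge> 2 \<and> R_multilinear_E phi sc (r - 1) C \<and>
     (\<exists>\<sigma>. R_multilinear_Der phi sc (r - 2) \<sigma>
        \<and> (\<forall>xs u w. length xs = r - 2 \<longrightarrow>
              \<sigma> xs (B u w) = B (C (xs @ [u])) w + B u (C (xs @ [w])))
        \<and> (\<forall>xs u i. length xs = r - 1 \<longrightarrow> i + 1 < r - 1 \<longrightarrow>
              B (C xs + C (xs[i := xs ! (i+1), i+1 := xs ! i])) u
                = \<sigma> (take i xs @ drop (i+2) xs @ [u]) (B (xs ! i) (xs ! (i+1))))))"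

text \<open>The wedge product C1 /\ C2 of C1 in C^r, C2 in C^s (r, s >= 1), evaluated on its
  r+s-1 arguments, defined by the characterizing recursion
  [C1 /\ C2, x] = (-1)^s [C1,x] /\ C2 + C1 /\ [C2,x] (with [C,x] = i_x C for degree >= 2,
  [y,x] = <y,x> for y in E, and a /\ C = a C = C /\ a for a in A = C^0, which follows from
  the characterization). (C1 /\ C2)(x # xs) = [C1 /\ C2, x](xs).\<close>
fun wedge_ev :: "('a::comm_ring_1 \<Rightarrow> 'e::ab_group_add \<Rightarrow> 'e) \<Rightarrow> ('e \<Rightarrow> 'e \<Rightarrow> 'a) \<Rightarrow> nat \<Rightarrow> nat
     \<Rightarrow> ('e list \<Rightarrow> 'e) \<Rightarrow> ('e list \<Rightarrow> 'e) \<Rightarrow> 'e list \<Rightarrow> 'e" where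
  "wedge_ev sc B r s C1 C2 [] = 0"
| "wedge_ev sc B r s C1 C2 (x # xs) =
     sc ((-1) ^ s) (if r \<le> 1 then sc (B (C1 []) x) (C2 xs)
                    else wedge_ev sc B (r - 1) s (\<lambda>ys. C1 (x # ys)) C2 xs)
   + (if s \<le> 1 then sc (B (C2 []) x) (C1 xs)
      else wedge_ev sc B r (s - 1) C1 (\<lambda>ys. C2 (x # ys)) xs)"

definition is_shuffle :: "nat \<Rightarrow> nat \<Rightarrow> (nat \<Rightarrow> nat) \<Rightarrow> bool" where
  "is_shuffle p q \<pi> \<longleftrightarrow> \<pi> permutes {..<p+q} \<and> strict_mono_on {..<p} \<pi> \<and> strict_mono_on {p..<p+q} \<pi>"

end

theory Submission
  imports Defs
begin

definition liftp :: "(nat \<Rightarrow> nat) \<Rightarrow> nat \<Rightarrow> nat" where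
  "liftp \<sigma> = (\<lambda>j. if j = 0 then 0 else Suc (\<sigma> (j - 1)))"
definition cyc :: "nat \<Rightarrow> nat \<Rightarrow> nat" where
  "cyc p = (\<lambda>j. if j < p then Suc j else if j = p then 0 else j)"

lemma liftp_map: "\<sigma> permutes {..<m} \<Longrightarrow> liftp \<sigma> = map_permutation {..<m} Suc \<sigma>"
  unfolding map_permutation_def restrict_id_def liftp_def
proof (rule ext)
  fix j assume s: "\<sigma> permutes {..<m}"
  show "(if j = 0 then 0 else Suc (\<sigma> (j - 1))) =
         (if j \<in> Suc ` {..<m} then (Suc \<circ> \<sigma> \<circ> inv_into {..<m} Suc) j else j)"
  proof (cases j)
    case 0 then show ?thesis by auto
  next
    case (Suc k)
    show ?thesis
    proof (cases "k < m")
      case True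
      have "inv_into {..<m} Suc (Suc k) = k" using True by (simp add: inv_into_f_f)
      then show ?thesis using Suc True by auto
    next
      case False
      then have "\<sigma> k = k" using s by (simp add: permutes_not_in)
      then show ?thesis using Suc False by auto
    qed
  qed
qed

lemma liftp_permutes: "\<sigma> permutes {..<m} \<Longrightarrow> liftp \<sigma> permutes {..<Suc m}"
proof -
  assume s: "\<sigma> permutes {..<m}"
  have "map_permutation {..<m} Suc \<sigma> permutes Suc ` {..<m}"
    by (rule map_permutation_permutes) (use s in auto)
  moreover have "Suc ` {..<m} \<subseteq> {..<Suc m}" by auto
  ultimately show ?thesis using liftp_map[OF s] permutes_subset by metis
qed

lemma sign_liftp: "\<sigma> permutes {..<m} \<Longrightarrow> sign (liftp \<sigma>) = sign \<sigma>"
  using liftp_map sign_map_permutation[of Suc "{..<m}" \<sigma>] by auto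

lemma cyc_Suc: "cyc (Suc p) = cyc p \<circ> Transposition.transpose p (Suc p)"
  by (auto simp: fun_eq_iff cyc_def Transposition.transpose_def)

lemma cyc_props: "cyc p permutes {..p} \<and> sign (cyc p) = (-1) ^ p"
proof (induction p)
  case 0
  have "cyc 0 = id" by (auto simp: fun_eq_iff cyc_def)
  then show ?case by (simp add: permutes_id id_def)
next
  case (Suc p)
  have t: "Transposition.transpose p (Suc p) permutes {..Suc p}"
    by (rule permutes_swap_id) auto
  have c: "cyc p permutes {..Suc p}"
    using Suc.IH permutes_subset[of "cyc p" "{..p}" "{..Suc p}"] by auto
  have "cyc (Suc p) permutes {..Suc p}" unfolding cyc_Suc
    by (rule permutes_compose[OF t c])
  moreover have "sign (cyc (Suc p)) = (-1) ^ Suc p" unfolding cyc_Suc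
    using Suc.IH c t
    by (subst sign_compose) (auto intro: permutes_imp_permutation simp: sign_swap_id)
  ultimately show ?case by simp
qed


lemma liftp_0[simp]: "liftp \<sigma> 0 = 0" and liftp_Suc[simp]: "liftp \<sigma> (Suc j) = Suc (\<sigma> j)"
  by (auto simp: liftp_def)

lemma liftp_cyc: "(liftp \<sigma> \<circ> cyc p) j = (if j < p then Suc (\<sigma> j) else if j = p then 0 else Suc (\<sigma> (j - 1)))"
  by (auto simp: liftp_def cyc_def)

lemma liftp_permutes_rev:
  assumes L: "liftp \<sigma> permutes {..<Suc m}" and fx: "\<And>j. j \<ge> m \<Longrightarrow> \<sigma> j = j"
  shows "\<sigma> permutes {..<m}"
proof -
  have inj: "inj \<sigma>"
  proof (rule injI)
    fix a b assume "\<sigma> a = \<sigma> b"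
    then have "liftp \<sigma> (Suc a) = liftp \<sigma> (Suc b)" by simp
    then have "Suc a = Suc b" using permutes_inj[OF L] by (rule injD[rotated])
    then show "a = b" by simp
  qed
  have surj: "surj \<sigma>"
  proof -
    { fix y
      obtain x where x: "liftp \<sigma> x = Suc y" using permutes_surj[OF L] by (metis surjD)
      then obtain k where "x = Suc k" by (cases x) auto
      with x have "\<sigma> k = y" by simp
      then have "y \<in> range \<sigma>" by blast }
    then show ?thesis by blast
  qed
  show ?thesis unfolding permutes_def
    using inj surj fx by (metis injD lessThan_iff not_less surjD)
qed

lemma shuffle_liftp: "is_shuffle p q \<sigma> \<Longrightarrow> is_shuffle (Suc p) q (liftp \<sigma>)"
  unfolding is_shuffle_def
proof (elim conjE, intro conjI)
  assume s: "\<sigma> permutes {..<p + q}" and m1: "strict_mono_on {..<p} \<sigma>"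
    and m2: "strict_mono_on {p..<p + q} \<sigma>"
  show "liftp \<sigma> permutes {..<Suc p + q}" using liftp_permutes[OF s] by simp
  show "strict_mono_on {..<Suc p} (liftp \<sigma>)"
  proof (rule strict_mono_onI)
    fix a b assume "a \<in> {..<Suc p}" "b \<in> {..<Suc p}" "a < b"
    then show "liftp \<sigma> a < liftp \<sigma> b"
      using m1 by (cases a; cases b) (auto simp: strict_mono_on_def)
  qed
  show "strict_mono_on {Suc p..<Suc p + q} (liftp \<sigma>)"
  proof (rule strict_mono_onI)
    fix a b assume "a \<in> {Suc p..<Suc p + q}" "b \<in> {Suc p..<Suc p + q}" "a < b"
    then show "liftp \<sigma> a < liftp \<sigma> b"
      using m2 by (cases a; cases b) (auto simp: strict_mono_on_def)
  qed
qed

lemma shuffle_liftp_cyc: "is_shuffle p q \<sigma> \<Longrightarrow> is_shuffle p (Suc q) (liftp \<sigma> \<circ> cyc p)"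
  unfolding is_shuffle_def
proof (elim conjE, intro conjI)
  assume s: "\<sigma> permutes {..<p + q}" and m1: "strict_mono_on {..<p} \<sigma>"
    and m2: "strict_mono_on {p..<p + q} \<sigma>"
  have c: "cyc p permutes {..<p + Suc q}"
  proof -
    have "{..p} \<subseteq> {..<p + Suc q}" by auto
    then show ?thesis using cyc_props[of p] permutes_subset by blast
  qed
  show "liftp \<sigma> \<circ> cyc p permutes {..<p + Suc q}"
    using permutes_compose[OF c, of "liftp \<sigma>"] liftp_permutes[OF s] by simp
  show "strict_mono_on {..<p} (liftp \<sigma> \<circ> cyc p)"
  proof (rule strict_mono_onI)
    fix a b assume "a \<in> {..<p}" "b \<in> {..<p}" "a < b"
    then have "\<sigma> a < \<sigma> b" using m1 by (auto simp: strict_mono_on_def)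
    then show "(liftp \<sigma> \<circ> cyc p) a < (liftp \<sigma> \<circ> cyc p) b"
      using \<open>a \<in> {..<p}\<close> \<open>b \<in> {..<p}\<close> by (simp only: liftp_cyc) simp
  qed
  show "strict_mono_on {p..<p + Suc q} (liftp \<sigma> \<circ> cyc p)"
  proof (rule strict_mono_onI)
    fix a b assume "a \<in> {p..<p + Suc q}" "b \<in> {p..<p + Suc q}" "a < b"
    then show "(liftp \<sigma> \<circ> cyc p) a < (liftp \<sigma> \<circ> cyc p) b"
    proof (cases "a = p")
      case True
      then show ?thesis using \<open>a < b\<close> by (simp only: liftp_cyc) simp
    next
      case False
      then have "a - 1 \<in> {p..<p+q}" "b - 1 \<in> {p..<p+q}" "a - 1 < b - 1"
        using \<open>a \<in> _\<close> \<open>b \<in> _\<close> \<open>a < b\<close> by auto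
      then have "\<sigma> (a - 1) < \<sigma> (b - 1)" using m2 by (simp add: strict_mono_on_def)
      then show ?thesis using False \<open>a \<in> _\<close> \<open>a < b\<close> by (simp only: liftp_cyc) simp
    qed
  qed
qed


lemma shuffle_zero:
  assumes "is_shuffle p q \<rho>" "0 < p + q"
  shows "(0 < p \<and> \<rho> 0 = 0) \<or> (0 < q \<and> \<rho> p = 0)"
proof -
  have s: "\<rho> permutes {..<p+q}" and m1: "strict_mono_on {..<p} \<rho>"
    and m2: "strict_mono_on {p..<p + q} \<rho>" using assms(1) by (auto simp: is_shuffle_def)
  have "0 \<in> \<rho> ` {..<p+q}" using permutes_image[OF s] assms(2) by auto
  then obtain k where k: "k < p + q" "\<rho> k = 0" by auto
  show ?thesis
  proof (cases "k < p")
    case True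
    have "k = 0"
    proof (rule ccontr)
      assume "k \<noteq> 0"
      then have "\<rho> 0 < \<rho> k" using m1 True by (auto simp: strict_mono_on_def)
      then show False using k by simp
    qed
    then show ?thesis using True k by auto
  next
    case False
    have "k = p"
    proof (rule ccontr)
      assume "k \<noteq> p"
      then have "p < k" using False by simp
      then have "\<rho> p < \<rho> k" using m2 k by (intro strict_mono_onD[OF m2]) auto
      then show False using k by simp
    qed
    then show ?thesis using k by auto
  qed
qed

lemma shuffle_lift_surj:
  assumes "is_shuffle (Suc p) q \<rho>" "\<rho> 0 = 0"
  shows "\<exists>\<sigma>. is_shuffle p q \<sigma> \<and> \<rho> = liftp \<sigma>"
proof -
  have s: "\<rho> permutes {..<Suc p+q}" and m1: "strict_mono_on {..<Suc p} \<rho>"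
    and m2: "strict_mono_on {Suc p..<Suc p + q} \<rho>" using assms(1) by (auto simp: is_shuffle_def)
  have nz: "\<rho> j \<noteq> 0" if "j \<noteq> 0" for j
    using permutes_inj[OF s] assms(2) that by (metis injD)
  define \<sigma> where "\<sigma> = (\<lambda>j. if j < p + q then \<rho> (Suc j) - 1 else j)"
  have eq: "\<rho> = liftp \<sigma>"
  proof (rule ext)
    fix j show "\<rho> j = liftp \<sigma> j"
    proof (cases j)
      case 0 then show ?thesis using assms(2) by simp
    next
      case (Suc k)
      show ?thesis
      proof (cases "k < p + q")
        case True then show ?thesis using Suc nz[of j] by (simp add: \<sigma>_def)
      next
        case False
        then have "\<rho> (Suc k) = Suc k" using s by (intro permutes_not_in) auto
        then show ?thesis using Suc False by (simp add: \<sigma>_def)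
      qed
    qed
  qed
  have "\<sigma> permutes {..<p+q}"
    by (rule liftp_permutes_rev) (use s eq in \<open>auto simp: \<sigma>_def\<close>)
  moreover have "strict_mono_on {..<p} \<sigma>"
  proof (rule strict_mono_onI)
    fix a b assume "a \<in> {..<p}" "b \<in> {..<p}" "a < b"
    then have "\<rho> (Suc a) < \<rho> (Suc b)" using m1 by (auto simp: strict_mono_on_def)
    then show "\<sigma> a < \<sigma> b" using \<open>a \<in> _\<close> \<open>b \<in> _\<close> nz[of "Suc a"] by (auto simp: \<sigma>_def)
  qed
  moreover have "strict_mono_on {p..<p+q} \<sigma>"
  proof (rule strict_mono_onI)
    fix a b assume "a \<in> {p..<p+q}" "b \<in> {p..<p+q}" "a < b"
    then have "\<rho> (Suc a) < \<rho> (Suc b)" using m2 by (auto simp: strict_mono_on_def)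
    then show "\<sigma> a < \<sigma> b" using \<open>a \<in> _\<close> \<open>b \<in> _\<close> nz[of "Suc a"] by (auto simp: \<sigma>_def)
  qed
  ultimately show ?thesis using eq by (auto simp: is_shuffle_def)
qed

lemma shuffle_cyc_surj:
  assumes "is_shuffle p (Suc q) \<rho>" "\<rho> p = 0"
  shows "\<exists>\<sigma>. is_shuffle p q \<sigma> \<and> \<rho> = liftp \<sigma> \<circ> cyc p"
proof -
  have s: "\<rho> permutes {..<p+Suc q}" and m1: "strict_mono_on {..<p} \<rho>"
    and m2: "strict_mono_on {p..<p + Suc q} \<rho>" using assms(1) by (auto simp: is_shuffle_def)
  have nz: "\<rho> j \<noteq> 0" if "j \<noteq> p" for j
    using permutes_inj[OF s] assms(2) that by (metis injD)
  define \<sigma> where "\<sigma> = (\<lambda>j. if j < p then \<rho> j - 1 else if j < p + q then \<rho> (Suc j) - 1 else j)"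
  have eq: "\<rho> = liftp \<sigma> \<circ> cyc p"
  proof (rule ext)
    fix j show "\<rho> j = (liftp \<sigma> \<circ> cyc p) j"
    proof -
      consider "j < p" | "j = p" | "p < j" "j < p + Suc q" | "p + Suc q \<le> j" by linarith
      then show ?thesis
      proof cases
        case 1 then show ?thesis using nz[of j] by (simp only: liftp_cyc) (simp add: \<sigma>_def)
      next
        case 2 then show ?thesis using assms(2) by (simp only: liftp_cyc) simp
      next
        case 3
        then obtain k where k: "j = Suc k" "p \<le> k" "k < p + q" by (cases j) auto
        have "\<sigma> k = \<rho> j - 1" using k by (simp add: \<sigma>_def)
        then show ?thesis using nz[of j] 3 k by (simp only: liftp_cyc) simp
      next
        case 4
        then have "\<rho> j = j" using s by (intro permutes_not_in) auto
        obtain k where k: "j = Suc k" "p + q \<le> k" using 4 by (cases j) auto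
        have "\<sigma> k = k" using k by (simp add: \<sigma>_def)
        then show ?thesis using \<open>\<rho> j = j\<close> 4 k by (simp only: liftp_cyc) simp
      qed
    qed
  qed
  have c: "cyc p permutes {..<Suc (p+q)}"
  proof -
    have "{..p} \<subseteq> {..<Suc (p+q)}" by auto
    then show ?thesis using cyc_props[of p] permutes_subset by blast
  qed
  have "liftp \<sigma> = \<rho> \<circ> inv (cyc p)"
    using eq permutes_inverses(1)[OF c] by (auto simp: fun_eq_iff)
  then have L: "liftp \<sigma> permutes {..<Suc (p+q)}"
    using permutes_compose[OF permutes_inv[OF c], of \<rho>] s by simp
  have "\<sigma> permutes {..<p+q}"
    by (rule liftp_permutes_rev[OF L]) (auto simp: \<sigma>_def)
  moreover have "strict_mono_on {..<p} \<sigma>"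
  proof (rule strict_mono_onI)
    fix a b assume "a \<in> {..<p}" "b \<in> {..<p}" "a < b"
    then have "\<rho> a < \<rho> b" using m1 by (auto simp: strict_mono_on_def)
    then show "\<sigma> a < \<sigma> b" using \<open>a \<in> _\<close> \<open>b \<in> _\<close> nz[of a] by (auto simp: \<sigma>_def)
  qed
  moreover have "strict_mono_on {p..<p+q} \<sigma>"
  proof (rule strict_mono_onI)
    fix a b assume "a \<in> {p..<p+q}" "b \<in> {p..<p+q}" "a < b"
    then have "\<rho> (Suc a) < \<rho> (Suc b)" using m2 by (auto simp: strict_mono_on_def)
    then show "\<sigma> a < \<sigma> b" using \<open>a \<in> _\<close> \<open>b \<in> _\<close> nz[of "Suc a"] by (auto simp: \<sigma>_def)
  qed
  ultimately show ?thesis using eq by (auto simp: is_shuffle_def)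
qed


definition T :: "('a::comm_ring_1 \<Rightarrow> 'e::ab_group_add \<Rightarrow> 'e) \<Rightarrow> nat \<Rightarrow> nat
    \<Rightarrow> ('e list \<Rightarrow> 'e list \<Rightarrow> 'e) \<Rightarrow> 'e list \<Rightarrow> 'e" where
  "T sc p q F ys = (\<Sum>\<pi>\<in>{\<pi>. is_shuffle p q \<pi>}. sc (of_int (sign \<pi>))
      (F (map (\<lambda>j. ys ! \<pi> j) [0..<p]) (map (\<lambda>j. ys ! \<pi> j) [p..<p+q])))"

lemma map_upt_Suc_shift: "map f [Suc m..<Suc n] = map (\<lambda>j. f (Suc j)) [m..<n]"
proof -
  have "[Suc m..<Suc n] = map Suc [m..<n]" by (rule map_Suc_upt[symmetric])
  then show ?thesis by simp
qed

lemma finite_Sh: "finite {\<pi>. is_shuffle p q \<pi>}"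
  by (rule finite_subset[OF _ finite_permutations[of "{..<p+q}"]]) (auto simp: is_shuffle_def)

lemma Sh_A: "{\<rho>. is_shuffle (Suc p) q \<rho> \<and> \<rho> 0 = 0} = liftp ` {\<sigma>. is_shuffle p q \<sigma>}"
  using shuffle_liftp shuffle_lift_surj by fastforce

lemma Sh_B: "{\<rho>. is_shuffle p (Suc q) \<rho> \<and> \<rho> p = 0} = (\<lambda>\<sigma>. liftp \<sigma> \<circ> cyc p) ` {\<sigma>. is_shuffle p q \<sigma>}"
proof -
  have "(liftp \<sigma> \<circ> cyc p) p = 0" for \<sigma> by (simp only: liftp_cyc) simp
  then show ?thesis using shuffle_liftp_cyc shuffle_cyc_surj by fastforce
qed

lemma inj_liftp: "inj liftp"
proof (rule injI)
  fix a b assume "liftp a = liftp b"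
  then have "liftp a (Suc j) = liftp b (Suc j)" for j by simp
  then show "a = b" by (auto simp: fun_eq_iff)
qed

lemma inj_liftp_cyc: "inj (\<lambda>\<sigma>. liftp \<sigma> \<circ> cyc p)"
proof (rule injI)
  fix a b assume e: "liftp a \<circ> cyc p = liftp b \<circ> cyc p"
  show "a = b"
  proof (rule ext)
    fix j show "a j = b j"
    proof (cases "j < p")
      case True
      then show ?thesis using fun_cong[OF e, of j] by (simp only: liftp_cyc) simp
    next
      case False
      then show ?thesis using fun_cong[OF e, of "Suc j"] by (simp only: liftp_cyc) simp
    qed
  qed
qed

lemma sign_liftp_cyc: "\<sigma> permutes {..<m} \<Longrightarrow> sign (liftp \<sigma> \<circ> cyc p) = sign \<sigma> * (-1) ^ p"
  using cyc_props[of p] liftp_permutes[of \<sigma> m]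
  by (subst sign_compose) (auto intro: permutes_imp_permutation simp: sign_liftp)

lemma T_decomp:
  assumes M: "module sc" and pq: "0 < p + q"
  shows "T sc p q F (x # xs) =
     (if 0 < p then T sc (p - 1) q (\<lambda>a b. F (x # a) b) xs else 0)
   + (if 0 < q then sc ((-1) ^ p) (T sc p (q - 1) (\<lambda>a b. F a (x # b)) xs) else 0)"
proof -
  define g where "g = (\<lambda>\<pi>. sc (of_int (sign \<pi>))
      (F (map (\<lambda>j. (x # xs) ! \<pi> j) [0..<p]) (map (\<lambda>j. (x # xs) ! \<pi> j) [p..<p+q])))"
  define A where "A = {\<rho>. is_shuffle p q \<rho> \<and> 0 < p \<and> \<rho> 0 = 0}"
  define B where "B = {\<rho>. is_shuffle p q \<rho> \<and> 0 < q \<and> \<rho> p = 0}"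
  have U: "{\<pi>. is_shuffle p q \<pi>} = A \<union> B"
    using shuffle_zero[OF _ pq] unfolding A_def B_def by blast
  have D: "A \<inter> B = {}"
  proof -
    { fix \<rho> assume "\<rho> \<in> A" "\<rho> \<in> B"
      then have "\<rho> permutes {..<p+q}" "0 < p" "\<rho> 0 = 0" "\<rho> p = 0"
        by (auto simp: A_def B_def is_shuffle_def)
      then have False using permutes_inj by (metis injD not_less0 less_irrefl) }
    then show ?thesis by blast
  qed
  have fA: "finite A" "finite B" using finite_Sh U by (metis finite_Un)+
  have "T sc p q F (x # xs) = sum g A + sum g B"
    unfolding T_def g_def[symmetric] U by (rule sum.union_disjoint[OF fA D])
  moreover have "sum g A = (if 0 < p then T sc (p - 1) q (\<lambda>a b. F (x # a) b) xs else 0)"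
  proof (cases p)
    case 0 then show ?thesis by (simp add: A_def)
  next
    case (Suc p')
    have "A = liftp ` {\<sigma>. is_shuffle p' q \<sigma>}" using Sh_A[of p' q] by (simp add: A_def Suc)
    then have "sum g A = sum (g \<circ> liftp) {\<sigma>. is_shuffle p' q \<sigma>}"
      using sum.reindex[OF inj_on_subset[OF inj_liftp]] by simp
    also have "\<dots> = T sc p' q (\<lambda>a b. F (x # a) b) xs"
      unfolding T_def
    proof (rule sum.cong[OF refl])
      fix \<sigma> assume "\<sigma> \<in> {\<sigma>. is_shuffle p' q \<sigma>}"
      then have s: "\<sigma> permutes {..<p'+q}" by (simp add: is_shuffle_def)
      have m1: "map (\<lambda>j. (x # xs) ! liftp \<sigma> j) [0..<p] = x # map (\<lambda>j. xs ! \<sigma> j) [0..<p']"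
        unfolding Suc upt_conv_Cons[OF zero_less_Suc] list.map
        by (simp only: One_nat_def map_upt_Suc_shift) simp
      have m2: "map (\<lambda>j. (x # xs) ! liftp \<sigma> j) [p..<p+q] = map (\<lambda>j. xs ! \<sigma> j) [p'..<p'+q]"
        unfolding Suc add_Suc by (simp only: map_upt_Suc_shift) simp
      show "(g \<circ> liftp) \<sigma> = sc (of_int (sign \<sigma>))
          ((\<lambda>a b. F (x # a) b) (map (\<lambda>j. xs ! \<sigma> j) [0..<p']) (map (\<lambda>j. xs ! \<sigma> j) [p'..<p'+q]))"
        unfolding g_def o_def m1 m2 sign_liftp[OF s] by simp
    qed
    finally show ?thesis using Suc by simp
  qed
  moreover have "sum g B = (if 0 < q then sc ((-1) ^ p) (T sc p (q - 1) (\<lambda>a b. F a (x # b)) xs) else 0)"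
  proof (cases q)
    case 0 then show ?thesis by (simp add: B_def)
  next
    case (Suc q')
    have "B = (\<lambda>\<sigma>. liftp \<sigma> \<circ> cyc p) ` {\<sigma>. is_shuffle p q' \<sigma>}" using Sh_B[of p q'] by (simp add: B_def Suc)
    then have "sum g B = sum (g \<circ> (\<lambda>\<sigma>. liftp \<sigma> \<circ> cyc p)) {\<sigma>. is_shuffle p q' \<sigma>}"
      using sum.reindex[OF inj_on_subset[OF inj_liftp_cyc]] by simp
    also have "\<dots> = (\<Sum>\<sigma>\<in>{\<sigma>. is_shuffle p q' \<sigma>}. sc ((-1) ^ p) (sc (of_int (sign \<sigma>))
          ((\<lambda>a b. F a (x # b)) (map (\<lambda>j. xs ! \<sigma> j) [0..<p]) (map (\<lambda>j. xs ! \<sigma> j) [p..<p+q']))))"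
    proof (rule sum.cong[OF refl])
      fix \<sigma> assume "\<sigma> \<in> {\<sigma>. is_shuffle p q' \<sigma>}"
      then have s: "\<sigma> permutes {..<p+q'}" by (simp add: is_shuffle_def)
      have m1: "map (\<lambda>j. (x # xs) ! (liftp \<sigma> \<circ> cyc p) j) [0..<p] = map (\<lambda>j. xs ! \<sigma> j) [0..<p]"
        by (rule map_cong[OF refl]) (simp only: liftp_cyc, simp)
      have m2: "map (\<lambda>j. (x # xs) ! (liftp \<sigma> \<circ> cyc p) j) [p..<p+q] = x # map (\<lambda>j. xs ! \<sigma> j) [p..<p+q']"
      proof -
        have "[p..<p+q] = p # [Suc p..<Suc (p+q')]" using Suc by (simp add: upt_conv_Cons)
        then have "map (\<lambda>j. (x # xs) ! (liftp \<sigma> \<circ> cyc p) j) [p..<p+q]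
            = (x # xs) ! (liftp \<sigma> \<circ> cyc p) p # map (\<lambda>j. (x # xs) ! (liftp \<sigma> \<circ> cyc p) (Suc j)) [p..<p+q']"
          by (simp only: list.map map_upt_Suc_shift)
        also have "\<dots> = x # map (\<lambda>j. xs ! \<sigma> j) [p..<p+q']"
          by (simp only: liftp_cyc) simp
        finally show ?thesis .
      qed
      have sg: "of_int (sign (liftp \<sigma> \<circ> cyc p)) = (-1) ^ p * (of_int (sign \<sigma>) :: 'a)"
        unfolding sign_liftp_cyc[OF s] by simp
      show "(g \<circ> (\<lambda>\<sigma>. liftp \<sigma> \<circ> cyc p)) \<sigma> = sc ((-1) ^ p) (sc (of_int (sign \<sigma>))
          ((\<lambda>a b. F a (x # b)) (map (\<lambda>j. xs ! \<sigma> j) [0..<p]) (map (\<lambda>j. xs ! \<sigma> j) [p..<p+q'])))"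
        unfolding o_apply[of g "\<lambda>\<sigma>. liftp \<sigma> \<circ> cyc p" \<sigma>] unfolding g_def m1 m2 sg module.scale_scale[OF M] by simp
    qed
    also have "\<dots> = sc ((-1) ^ p) (T sc p q' (\<lambda>a b. F a (x # b)) xs)"
      unfolding T_def module.scale_sum_right[OF M] ..
    finally show ?thesis using Suc by simp
  qed
  ultimately show ?thesis by simp
qed


lemma Sh00: "{\<pi>. is_shuffle 0 0 \<pi>} = {id}"
  by (auto simp: is_shuffle_def)

lemma T0:
  assumes M: "module sc"
  shows "length ys = q \<Longrightarrow> T sc 0 q F ys = F [] ys"
proof (induction ys arbitrary: q F)
  case Nil
  then show ?case by (simp add: T_def Sh00 module.scale_one[OF M])
next
  case (Cons x xs)
  then obtain q' where q: "q = Suc q'" "length xs = q'" by auto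
  show ?case unfolding q(1)
    by (subst T_decomp[OF M]) (auto simp: Cons.IH q(2) module.scale_one[OF M])
qed

definition G :: "('a::comm_ring_1 \<Rightarrow> 'e::ab_group_add \<Rightarrow> 'e) \<Rightarrow> ('e \<Rightarrow> 'e \<Rightarrow> 'a) \<Rightarrow> nat
    \<Rightarrow> ('e list \<Rightarrow> 'e) \<Rightarrow> ('e list \<Rightarrow> 'e) \<Rightarrow> 'e list \<Rightarrow> 'e list \<Rightarrow> 'e" where
  "G sc B k C D ys zs = sc (B (C (take (k - 1) ys)) (ys ! (k - 1))) (D zs)"

lemma TG:
  assumes M: "module sc" and k: "1 \<le> k" and len: "length xs + 1 = k + m"
  shows "T sc k m (G sc B k C D) (x # xs) =
     (if k = 1 then sc (B (C []) x) (D xs) else T sc (k - 1) m (G sc B (k - 1) (\<lambda>ys. C (x # ys)) D) xs)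
   + (if 0 < m then sc ((-1) ^ k) (T sc k (m - 1) (G sc B k C (\<lambda>ys. D (x # ys))) xs) else 0)"
proof -
  have e2: "(\<lambda>a b. G sc B k C D a (x # b)) = G sc B k C (\<lambda>ys. D (x # ys))"
    by (simp add: G_def fun_eq_iff)
  have e1: "(if 0 < k then T sc (k - 1) m (\<lambda>a b. G sc B k C D (x # a) b) xs else 0)
     = (if k = 1 then sc (B (C []) x) (D xs) else T sc (k - 1) m (G sc B (k - 1) (\<lambda>ys. C (x # ys)) D) xs)"
  proof (cases "k = 1")
    case True
    then show ?thesis using len by (simp add: T0[OF M] G_def)
  next
    case False
    then obtain k' where k': "k = Suc (Suc k')" using k by (metis One_nat_def Suc_le_D not_less_eq_eq le_antisym nat.exhaust)
    have "(\<lambda>a b. G sc B k C D (x # a) b) = G sc B (k - 1) (\<lambda>ys. C (x # ys)) D"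
      by (simp add: G_def fun_eq_iff k')
    then show ?thesis using False k' by simp
  qed
  show ?thesis using k
    by (subst T_decomp[OF M]) (use e1 e2 in auto)
qed

lemma pw1: "1 \<le> r \<Longrightarrow> (-1::'a::comm_ring_1) ^ s * (-1) ^ ((r - 1) * s) = (-1) ^ (r * s)"
proof -
  assume "1 \<le> r"
  then have "r * s = s + (r - 1) * s" by (cases r) auto
  then show ?thesis by (simp add: power_add)
qed

lemma pw2: "1 \<le> s \<Longrightarrow> (-1::'a::comm_ring_1) ^ (r * s) * (-1) ^ r = (-1) ^ (r * (s - 1))"
proof -
  assume "1 \<le> s"
  then have "r * s = r * (s - 1) + r" by (cases s) auto
  moreover have "(-1::'a) ^ r * (-1) ^ r = 1" by (simp flip: power_add)
  ultimately show ?thesis by (simp add: power_add mult.assoc)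
qed


lemma W:
  assumes M: "module sc"
  shows "1 \<le> r \<Longrightarrow> 1 \<le> s \<Longrightarrow> length xs = r + s - 1 \<Longrightarrow>
    wedge_ev sc B r s C1 C2 xs = sc ((-1) ^ (r * s)) (T sc r (s - 1) (G sc B r C1 C2) xs)
       + T sc s (r - 1) (G sc B s C2 C1) xs"
proof (induction xs arbitrary: r s C1 C2)
  case Nil
  then show ?case by simp
next
  case (Cons x xs)
  note sd = module.scale_right_distrib[OF M] module.scale_scale[OF M]
  have l: "length xs + 1 = r + (s - 1)" "length xs + 1 = s + (r - 1)" using Cons.prems by auto
  note t1 = TG[OF M Cons.prems(1) l(1), of B C1 C2 x]
  note t2 = TG[OF M Cons.prems(2) l(2), of B C2 C1 x]
  show ?case
  proof (cases "r = 1")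
    case r1: True
    show ?thesis
    proof (cases "s = 1")
      case True
      then show ?thesis using r1 t1 t2 by (simp add: sd)
    next
      case False
      then have s2: "2 \<le> s" using Cons.prems by auto
      have ih: "wedge_ev sc B r (s - 1) C1 (\<lambda>ys. C2 (x # ys)) xs =
         sc ((-1) ^ (r * (s - 1))) (T sc r (s - 1 - 1) (G sc B r C1 (\<lambda>ys. C2 (x # ys))) xs)
          + T sc (s - 1) (r - 1) (G sc B (s - 1) (\<lambda>ys. C2 (x # ys)) C1) xs"
        using Cons.IH[of r "s - 1"] Cons.prems s2 by auto
      have p: "(-1::'a) ^ s * (-1) = (-1) ^ (s - 1)"
        using pw2[of s 1] s2 by simp
      show ?thesis using r1 s2 t1 t2 ih p by (simp add: sd add_ac)
    qed
  next
    case r2': False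
    then have r2: "2 \<le> r" using Cons.prems by auto
    have ihr: "wedge_ev sc B (r - 1) s (\<lambda>ys. C1 (x # ys)) C2 xs =
         sc ((-1) ^ ((r - 1) * s)) (T sc (r - 1) (s - 1) (G sc B (r - 1) (\<lambda>ys. C1 (x # ys)) C2) xs)
          + T sc s (r - 1 - 1) (G sc B s C2 (\<lambda>ys. C1 (x # ys))) xs"
      using Cons.IH[of "r - 1" s] Cons.prems r2 by auto
    show ?thesis
    proof (cases "s = 1")
      case True
      have p: "(-1::'a) * (-1) ^ (r - 1) = (-1) ^ r"
        using pw1[of r 1] r2 by simp
      show ?thesis using True r2 t1 t2 ihr p by (simp add: sd add_ac)
    next
      case False
      then have s2: "2 \<le> s" using Cons.prems by auto
      have ih: "wedge_ev sc B r (s - 1) C1 (\<lambda>ys. C2 (x # ys)) xs =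
         sc ((-1) ^ (r * (s - 1))) (T sc r (s - 1 - 1) (G sc B r C1 (\<lambda>ys. C2 (x # ys))) xs)
          + T sc (s - 1) (r - 1) (G sc B (s - 1) (\<lambda>ys. C2 (x # ys)) C1) xs"
        using Cons.IH[of r "s - 1"] Cons.prems s2 by auto
      have p1: "(-1::'a) ^ s * (-1) ^ ((r - 1) * s) = (-1) ^ (r * s)" by (rule pw1) (use r2 in simp)
      have p2: "(-1::'a) ^ (r * s) * (-1) ^ r = (-1) ^ (r * (s - 1))" by (rule pw2) (use s2 in simp)
      have "wedge_ev sc B r s C1 C2 (x # xs) =
          sc ((-1) ^ s) (wedge_ev sc B (r - 1) s (\<lambda>ys. C1 (x # ys)) C2 xs)
          + wedge_ev sc B r (s - 1) C1 (\<lambda>ys. C2 (x # ys)) xs"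
        using r2 s2 by simp
      then show ?thesis unfolding ihr ih t1 t2 using r2 s2
        by (simp add: sd p2 add_ac) (metis p1 One_nat_def)
    qed
  qed
qed


lemma T_unfold:
  assumes "1 \<le> k"
  shows "T sc k m (G sc B k C D) xs =
    (\<Sum>\<pi>\<in>{\<pi>. is_shuffle k m \<pi>}.
           sc (of_int (sign \<pi>))
             (sc (B (C (map (\<lambda>j. xs ! \<pi> j) [0..<k - 1])) (xs ! \<pi> (k - 1)))
                 (D (map (\<lambda>j. xs ! \<pi> j) [k..<k + m]))))"
  unfolding T_def G_def using assms by (simp add: take_map)

theorem mainTheorem11:
  fixes phi :: "'r::comm_ring_1 \<Rightarrow> 'a::comm_ring_1"
    and sc :: "'a \<Rightarrow> 'e::ab_group_add \<Rightarrow> 'e"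
    and B :: "'e \<Rightarrow> 'e \<Rightarrow> 'a"
    and C1 C2 :: "'e list \<Rightarrow> 'e"
    and r s :: nat
    and xs :: "'e list"
  assumes "contains_rationals TYPE('r)"
    and "unital_ring_hom phi"
    and "module sc"
    and "fg_projective sc"
    and "A_bilinear sc B"
    and "symmetric_form B"
    and "strongly_nondegenerate sc B"
    and "full_form B"
    and "r \<ge> 1" and "s \<ge> 1"
    and "in_C phi sc B r C1"
    and "in_C phi sc B s C2"
    and "length xs = r + s - 1"
  shows "wedge_ev sc B r s C1 C2 xs =
      sc ((-1) ^ (r * s))
        (\<Sum>\<pi>\<in>{\<pi>. is_shuffle r (s - 1) \<pi>}.
           sc (of_int (sign \<pi>))
             (sc (B (C1 (map (\<lambda>j. xs ! \<pi> j) [0..<r - 1])) (xs ! \<pi> (r - 1)))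
                 (C2 (map (\<lambda>j. xs ! \<pi> j) [r..<r + s - 1]))))
    + (\<Sum>\<pi>\<in>{\<pi>. is_shuffle s (r - 1) \<pi>}.
           sc (of_int (sign \<pi>))
             (sc (B (C2 (map (\<lambda>j. xs ! \<pi> j) [0..<s - 1])) (xs ! \<pi> (s - 1)))
                 (C1 (map (\<lambda>j. xs ! \<pi> j) [s..<r + s - 1]))))"
proof -
  have e1: "r + (s - 1) = r + s - 1" and e2: "s + (r - 1) = r + s - 1" using assms(9,10) by auto
  show ?thesis
    using W[OF assms(3) assms(9,10,13), of B C1 C2]
      T_unfold[OF assms(9), of sc "s - 1" B C1 C2 xs] T_unfold[OF assms(10), of sc "r - 1" B C2 C1 xs]
    unfolding e1 e2 by simp
qed

end
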